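(* Let $\zeta:(0,\pi]\to\mathbb R^p$ be continuously differentiable with $\|\zeta(\lambda)\|\le K|\log\lambda|^\ell$ for some $\ell\ge1$ and $\|\partial\zeta(\lambda)/\partial\lambda\|\le K\lambda^{-1}|\log\lambda|^{\ell-1}$ for all $\lambda\in(0,\pi]$, where $K<\infty$. Then, as $T\to\infty$, $$\sup_{\lambda\in[0,\pi]}\Big\|\frac1{\tilde T}\sum_{j=1}^{[\tilde T\lambda/\pi]}\zeta(\lambda_j)-\frac1\pi\int_0^\lambda\zeta(x)\,dx\Big\|\le K'\frac{(\log\tilde T)^\ell}{\tilde T}$$ for some constant $K'<\infty$.
   Context: $T$ is a positive integer (sample size), $\tilde T=[T/2]$ (integer part), and $\lambda_j=2\pi j/T$ are the Fourier frequencies. *)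

theory Defs
  imports "HOL-Analysis.Analysis"
begin

text \<open>Real power of an absolute value with the mathematical convention 0 to the power 0 equals 1
  (Isabelle's powr has 0 powr 0 = 0).\<close>
definition abspow :: "real \<Rightarrow> real \<Rightarrow> real" where
  "abspow y a = (if y = 0 \<and> a = 0 then 1 else \<bar>y\<bar> powr a)"

end

theory Submission
  imports Defs "HOL-Real_Asymp.Real_Asymp"
begin

lemma abspow_ln_lt1:
  assumes "0 < x" "x < 1" "l > 0"
  shows "abspow (ln x) l = (- ln x) powr l"
  using assms by (simp add: abspow_def)

lemma abspow_le:
  assumes "0 < L" "\<bar>y\<bar> \<le> L" "0 \<le> a"
  shows "abspow y a \<le> L powr a"
proof (cases "y = 0 \<and> a = 0")
  case True then show ?thesis using assms by (simp add: abspow_def)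
next
  case False
  then have "abspow y a = \<bar>y\<bar> powr a" by (simp add: abspow_def)
  also have "\<dots> \<le> L powr a" using assms by (intro powr_mono2) auto
  finally show ?thesis .
qed

definition FF :: "real \<Rightarrow> real \<Rightarrow> real" where
  "FF l x = x * (- ln x) powr l"
definition FD :: "real \<Rightarrow> real \<Rightarrow> real" where
  "FD l x = (- ln x) powr l - l * (- ln x) powr (l - 1)"

lemma FF_deriv:
  assumes "0 < x" "x < 1"
  shows "(FF l has_real_derivative FD l x) (at x)"
proof -
  have "- ln x > 0" using assms by simp
  have "((\<lambda>x. x * (- ln x) powr l) has_real_derivative
     1 * (- ln x) powr l + x * (l * (- ln x) powr (l - 1) * (- inverse x))) (at x)"
    using assms \<open>- ln x > 0\<close>
    by (auto intro!: derivative_eq_intros)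
  moreover have "1 * (- ln x) powr l + x * (l * (- ln x) powr (l - 1) * (- inverse x)) = FD l x"
    using assms by (simp add: FD_def field_simps)
  ultimately show ?thesis unfolding FF_def by simp
qed

lemma FD_ge:
  assumes "l \<ge> 1" "0 < x" "x \<le> exp (-2*l)"
  shows "(- ln x) powr l \<le> 2 * FD l x"
proof -
  have "ln x \<le> -2*l" using assms by (metis exp_le_cancel_iff exp_ln)
  then have y: "- ln x \<ge> 2*l" by simp
  define y where "y = - ln x"
  have ypos: "y > 0" using y assms unfolding y_def by linarith
  have "y powr l = y * y powr (l - 1)"
    using ypos by (simp add: powr_diff powr_one)  
  moreover have "2 * l * y powr (l - 1) \<le> y * y powr (l - 1)"
    using y ypos unfolding y_def[symmetric] by (intro mult_right_mono) auto
  ultimately show ?thesis unfolding FD_def y_def[symmetric] by simp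
qed

lemma FF_cont:
  assumes "0 < c" "c < 1"
  shows "continuous_on {0..c} (FF l)"
proof -
  have lim: "(FF l \<longlongrightarrow> 0) (at_right 0)"
    unfolding FF_def by real_asymp
  show ?thesis
    unfolding continuous_on_eq_continuous_within
  proof
    fix x assume x: "x \<in> {0..c}"
    show "continuous (at x within {0..c}) (FF l) "
    proof (cases "x = 0")
      case True
      then show ?thesis using lim assms
        by (simp add: continuous_within at_within_Icc_at_right FF_def)
    next
      case False
      then have "0 < x" "x < 1" using x assms by auto
      then have "isCont (FF l) x" using FF_deriv DERIV_isCont by blast
      then show ?thesis using continuous_at_imp_continuous_at_within by blast
    qed
  qed
qed

lemma FF_integral:
  assumes "l \<ge> 1" "0 \<le> a" "a \<le> b" "b < 1"
  shows "(FD l has_integral (FF l b - FF l a)) {a..b}"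
proof (cases "b = 0")
  case True then show ?thesis using assms has_integral_refl(2)[of "FD l" 0] by simp
next
  case False
  show ?thesis
  proof (rule fundamental_theorem_of_calculus_interior)
    show "continuous_on {a..b} (FF l)"
      using FF_cont[of b l] False assms by (auto intro: continuous_on_subset)
    show "(FF l has_vector_derivative FD l x) (at x)" if "x \<in> {a<..<b}" for x
      using FF_deriv[of x l] that assms by (simp add: has_real_derivative_iff_has_vector_derivative)
  qed (use assms in auto)
qed

lemma FF_mono:
  assumes "l \<ge> 1" "0 \<le> a" "a \<le> b" "b \<le> exp (-2*l)"
  shows "FF l a \<le> FF l b"
proof -
  have e: "exp (-2*l) < 1" using assms by simp
  show ?thesis
  proof (rule DERIV_nonneg_imp_increasing_open[OF assms(3)])
    fix x assume x: "a < x" "x < b"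
    have "0 \<le> (- ln x) powr l" by simp
    also have "\<dots> \<le> 2 * FD l x" using FD_ge[of l x] x assms by auto
    finally have "FD l x \<ge> 0" by simp
    then show "\<exists>y. (FF l has_real_derivative y) (at x) \<and> 0 \<le> y"
      using FF_deriv[of x l] x assms e by auto
  next
    show "continuous_on {a..b} (FF l)"
    proof (cases "b = 0")
      case True then show ?thesis using assms by simp
    next
      case False then show ?thesis
      using FF_cont[of b l] assms e by (auto intro: continuous_on_subset)
    qed
  qed
qed

lemma FF_nonneg: "0 \<le> x \<Longrightarrow> 0 \<le> FF l x"
  by (simp add: FF_def)

lemma sum_harm: "(\<Sum>j=1..N. (if j = 1 then (0::real) else inverse (real (j - 1)))) = harm (N - 1)"
proof (induction N)
  case 0
  then show ?case by (simp add: harm_def)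
next
  case (Suc N)
  show ?case
  proof (cases "N = 0")
    case True then show ?thesis by (simp add: harm_def)
  next
    case False
    then have "harm N = harm (N - 1) + inverse (real N)"
      using harm_Suc[of "N - 1"] by simp
    then show ?thesis using Suc False by simp
  qed
qed

lemma harm_le: assumes "m \<le> n" "1 \<le> n" shows "harm m \<le> 1 + ln (real n)"
proof (cases "m = 0")
  case True then show ?thesis using assms by (simp add: harm_def)
next
  case False
  have "harm m - ln (real m) \<le> harm 1 - ln (real (1::nat))"
    using euler_mascheroni_sequence_decreasing[of 1 m] False by simp
  then have "harm m \<le> 1 + ln (real m)" by (simp add: harm_def)
  also have "ln (real m) \<le> ln (real n)" using assms False by simp
  finally show ?thesis by simp
qed


context
  fixes \<zeta> \<zeta>' :: "real \<Rightarrow> 'p::euclidean_space" and K l :: real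
  assumes deriv: "\<And>x. x \<in> {0<..pi} \<Longrightarrow> (\<zeta> has_vector_derivative \<zeta>' x) (at x within {0<..pi})"
    and cont: "continuous_on {0<..pi} \<zeta>'"
    and l1: "l \<ge> 1"
    and bnd: "\<And>x. x \<in> {0<..pi} \<Longrightarrow> norm (\<zeta> x) \<le> K * abspow (ln x) l"
    and dbnd: "\<And>x. x \<in> {0<..pi} \<Longrightarrow> norm (\<zeta>' x) \<le> K * inverse x * abspow (ln x) (l - 1)"
begin

lemma c0_props: "0 < exp (-2*l)" "exp (-2*l) \<le> 1/3" "exp (-2*l) < 1"
proof -
  show "0 < exp (-2*l)" by simp
  have "exp (-2*l) \<le> exp (-2)" using l1 by simp
  also have "exp (-2::real) = inverse (exp 2)" by (simp add: exp_minus)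
  also have "\<dots> \<le> 1/3"
  proof -
    have "(3::real) \<le> exp 2" using exp_ge_add_one_self[of 2] by simp
    then show ?thesis by (simp add: field_simps)
  qed
  finally show "exp (-2*l) \<le> 1/3" .
  then show "exp (-2*l) < 1" by linarith
qed

lemma Z0: "K \<ge> 0"
proof -
  have "(2::real) \<in> {0<..pi}" using pi_gt3 by simp
  then have "norm (\<zeta> 2) \<le> K * abspow (ln 2) l" by (rule bnd)
  moreover have "abspow (ln 2) l > 0" by (simp add: abspow_def)
  ultimately have "0 \<le> K * abspow (ln 2) l" by (meson norm_ge_zero order_trans)
  with \<open>abspow (ln 2) l > 0\<close> show ?thesis by (simp add: zero_le_mult_iff)
qed

lemma Z1: "continuous_on {0<..pi} \<zeta>"
  unfolding continuous_on_eq_continuous_within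
proof
  fix x assume "x \<in> {0<..pi}"
  then show "continuous (at x within {0<..pi}) \<zeta>" by (rule has_vector_derivative_continuous[OF deriv])
qed

lemma Z2: assumes "0 < x" "x \<le> exp (-2*l)" shows "norm (\<zeta> x) \<le> 2 * K * FD l x"
proof -
  have x1: "x < 1" using assms c0_props by linarith
  have "x \<in> {0<..pi}" using assms x1 pi_gt3 by auto
  then have "norm (\<zeta> x) \<le> K * abspow (ln x) l" by (rule bnd)
  also have "abspow (ln x) l = (- ln x) powr l" using abspow_ln_lt1[of x l] assms x1 l1 by simp
  also have "K * \<dots> \<le> K * (2 * FD l x)" using FD_ge[of l x] assms l1 Z0 by (intro mult_left_mono) auto
  finally show ?thesis by simp
qed

lemma negl_lemma: "negligible {x \<in> S. P x}" if "S \<subseteq> {a}" for S :: "real set" and a P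
  by (rule negligible_subset[OF negligible_sing[of a]]) (use that in auto)

lemma Z3:
  assumes "0 \<le> a" "a \<le> b" "b \<le> exp (-2*l)"
  shows "\<zeta> integrable_on {a..b}" "norm (integral {a..b} \<zeta>) \<le> 2 * K * FF l b"
proof -
  have b1: "b < 1" using assms c0_props by linarith
  define S where "S = {a<..b}"
  have Sl: "S \<in> sets lebesgue" unfolding S_def by simp
  have SS: "S \<subseteq> {0<..pi}" unfolding S_def using assms b1 pi_gt3 by auto
  have meas: "\<zeta> \<in> borel_measurable (lebesgue_on S)"
    by (rule continuous_imp_measurable_on_sets_lebesgue[OF continuous_on_subset[OF Z1 SS] Sl])
  have FI: "((\<lambda>x. 2 * K * FD l x) has_integral (2 * K * (FF l b - FF l a))) {a..b}"
    using has_integral_mult_right[OF FF_integral[OF l1 assms(1,2) b1], of "2*K"] by simp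
  have ng1: "negligible {x \<in> {a..b} - S. P x}" for P
    by (rule negl_lemma[of _ a]) (auto simp: S_def)
  have ng2: "negligible {x \<in> S - {a..b}. P x}" for P
    by (rule negl_lemma[of _ a]) (auto simp: S_def)
  have FIS: "((\<lambda>x. 2 * K * FD l x) has_integral (2 * K * (FF l b - FF l a))) S"
    by (rule iffD1[OF has_integral_spike_set_eq[OF ng1 ng2] FI])
  have nb: "norm (\<zeta> x) \<le> 2 * K * FD l x" if "x \<in> S" for x
    using that Z2 assms unfolding S_def by auto
  have intS: "\<zeta> integrable_on S"
    by (rule measurable_bounded_by_integrable_imp_integrable[OF meas has_integral_integrable[OF FIS] nb Sl])
  show "\<zeta> integrable_on {a..b}"
    using integrable_spike_set[OF intS ng2 ng1] .
  have "integral {a..b} \<zeta> = integral S \<zeta>"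
    by (rule integral_spike_set[OF ng1 ng2])
  also have "norm \<dots> \<le> integral S (\<lambda>x. 2 * K * FD l x)"
    by (rule integral_norm_bound_integral[OF intS has_integral_integrable[OF FIS] nb])
  also have "\<dots> = 2 * K * (FF l b - FF l a)" using FIS by (rule integral_unique)
  also have "\<dots> \<le> 2 * K * FF l b" using Z0 FF_nonneg[OF assms(1)] by (simp add: mult_left_mono)
  finally show "norm (integral {a..b} \<zeta>) \<le> 2 * K * FF l b" .
qed

lemma Z4: assumes "0 \<le> a" "a \<le> b" "b \<le> pi" shows "\<zeta> integrable_on {a..b}"
proof -
  define c where "c = exp (-2*l)"
  have c: "0 < c" "c < 1" using c0_props unfolding c_def by auto
  have "\<zeta> integrable_on {0..c}" using Z3[of 0 c] c unfolding c_def by auto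
  moreover have "\<zeta> integrable_on {c..pi}"
    by (rule integrable_continuous_interval, rule continuous_on_subset[OF Z1]) (use c in auto)
  ultimately have "\<zeta> integrable_on {0..pi}"
    using c pi_gt3 by (intro Henstock_Kurzweil_Integration.integrable_combine[where a=0 and c=c and b=pi]) auto
  then show ?thesis by (rule integrable_subinterval_real) (use assms in auto)
qed

lemma Z5:
  assumes "0 < h" "h * pi \<le> 1" "h \<le> x" "x \<le> pi"
  shows "norm (\<zeta> x) \<le> K * (- ln h) powr l"
    and "norm (\<zeta>' x) \<le> K / x * (- ln h) powr (l - 1)"
proof -
  have x0: "x > 0" using assms by linarith
  have "h * 3 < h * pi" using assms pi_gt3 by simp
  then have h1: "h < 1" using assms by linarith
  have L0: "- ln h > 0" using assms h1 by simp
  have "ln x \<ge> ln h" using assms x0 by simp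
  moreover have "ln x \<le> - ln h"
  proof -
    have "h * x \<le> h * pi" using assms by (intro mult_left_mono) auto
    moreover have "h * pi = pi * h" by simp
    ultimately have "h * x \<le> 1" using assms by linarith
    then have "x \<le> inverse h" using assms by (simp add: field_simps)
    then have "ln x \<le> ln (inverse h)" by (subst ln_le_cancel_iff) (use x0 assms(1) in auto)
    then show ?thesis using assms by (simp add: ln_inverse)
  qed
  ultimately have lb: "\<bar>ln x\<bar> \<le> - ln h" by linarith
  have xi: "x \<in> {0<..pi}" using x0 assms by simp
  have "norm (\<zeta> x) \<le> K * abspow (ln x) l" using bnd[OF xi] .
  also have "\<dots> \<le> K * (- ln h) powr l"
    using abspow_le[OF L0 lb, of l] l1 Z0 by (intro mult_left_mono) auto
  finally show "norm (\<zeta> x) \<le> K * (- ln h) powr l" .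
  have "norm (\<zeta>' x) \<le> K * inverse x * abspow (ln x) (l - 1)" using dbnd[OF xi] .
  also have "\<dots> \<le> K * inverse x * (- ln h) powr (l - 1)"
    using abspow_le[OF L0 lb, of "l - 1"] l1 Z0 x0 by (intro mult_left_mono) auto
  finally show "norm (\<zeta>' x) \<le> K / x * (- ln h) powr (l - 1)" by (simp add: field_simps)
qed


lemma Z6:
  assumes h: "0 < h" "3 * h \<le> exp (-2*l)" "h * pi \<le> 1"
    and ab: "0 \<le> a" "a \<le> b" "b \<le> pi" "b - a \<le> 2 * h"
  shows "norm (integral {a..b} \<zeta>) \<le> 6 * K * h * (- ln h) powr l"
proof (cases "h \<le> a")
  case True
  have int: "(\<zeta> has_integral integral {a..b} \<zeta>) (cbox a b)"
    using Z4[OF ab(1-3)] by (simp add: integrable_integral)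
  have "norm (integral {a..b} \<zeta>) \<le> (K * (- ln h) powr l) * (b - a)"
    using has_integral_bound[OF _ int, of "K * (- ln h) powr l"] Z0 True ab h Z5(1)[of h] by auto
  also have "(K * (- ln h) powr l) * (b - a) \<le> (K * (- ln h) powr l) * (2 * h)"
    using ab Z0 by (intro mult_left_mono) auto
  also have "\<dots> \<le> 6 * K * h * (- ln h) powr l" using Z0 h by (simp add: mult_ac)
  finally show ?thesis .
next
  case False
  have c: "exp (-2*l) < 1" using c0_props by simp
  have b3: "b \<le> 3 * h" using False ab by linarith
  have "norm (integral {a..b} \<zeta>) \<le> 2 * K * FF l b"
    using Z3(2)[of a b] ab b3 h by linarith
  also have "\<dots> \<le> 2 * K * FF l (3 * h)"
    using FF_mono[OF l1 _ b3 h(2)] ab Z0 by (intro mult_left_mono) auto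
  also have "FF l (3 * h) = 3 * h * (- ln (3 * h)) powr l" by (simp add: FF_def)
  also have "(- ln (3 * h)) powr l \<le> (- ln h) powr l"
  proof (rule powr_mono2)
    have "3 * h \<le> 1" using h c by linarith
    then show "0 \<le> - ln (3 * h)" using h by simp
    show "- ln (3 * h) \<le> - ln h" using h by simp
  qed (use l1 in auto)
  then have "2 * K * (3 * h * (- ln (3 * h)) powr l) \<le> 2 * K * (3 * h * (- ln h) powr l)"
    using Z0 h by (intro mult_left_mono) auto
  finally show ?thesis by (simp add: mult_ac)
qed

lemma Z7:
  assumes h: "0 < h" "h * pi \<le> 1" and a: "h \<le> a" "a + h \<le> pi"
  shows "norm (h *\<^sub>R \<zeta> (a + h) - integral {a..a+h} \<zeta>) \<le> h * h * (K / a * (- ln h) powr (l - 1))"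
proof -
  define B where "B = K / a * (- ln h) powr (l - 1)"
  have a0: "a > 0" using h a by linarith
  have B0: "B \<ge> 0" unfolding B_def using Z0 a0 by simp
  have SS: "{a..a+h} \<subseteq> {0<..pi}" using a0 a by auto
  have md: "norm (\<zeta> (a + h) - \<zeta> x) \<le> B * h" if x: "x \<in> {a..a+h}" for x
  proof -
    have "norm (\<zeta> (a + h) - \<zeta> x) \<le> B * norm ((a + h) - x)"
    proof (rule differentiable_bound[where f' = "\<lambda>x t. t *\<^sub>R \<zeta>' x"])
      show "convex {a..a+h}" by simp
      show "(\<zeta> has_derivative (\<lambda>t. t *\<^sub>R \<zeta>' y)) (at y within {a..a+h})" if "y \<in> {a..a+h}" for y
      proof -
        have "y \<in> {0<..pi}" using that SS by auto
        then show ?thesis using has_derivative_subset[OF deriv[of y, unfolded has_vector_derivative_def] SS] by simp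
      qed
      show "onorm (\<lambda>t. t *\<^sub>R \<zeta>' y) \<le> B" if y: "y \<in> {a..a+h}" for y
      proof -
        have "onorm (\<lambda>t. t *\<^sub>R \<zeta>' y) = norm (\<zeta>' y)"
          using onorm_scaleR_left[OF bounded_linear_ident, of "\<zeta>' y"] by (simp add: onorm_id)
        also have "\<dots> \<le> K / y * (- ln h) powr (l - 1)"
          using Z5(2)[OF h, of y] y a by auto
        also have "\<dots> \<le> B" unfolding B_def
          using Z0 a0 y by (intro mult_right_mono divide_left_mono) auto
        finally show ?thesis .
      qed
    qed (use x a0 h in auto)
    also have "\<dots> \<le> B * h" using x B0 by (intro mult_left_mono) auto
    finally show ?thesis .
  qed
  have int: "\<zeta> integrable_on {a..a+h}" using Z4[of a "a+h"] a0 a h by auto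
  have eq: "integral {a..a+h} (\<lambda>x. \<zeta> (a + h) - \<zeta> x) = h *\<^sub>R \<zeta> (a + h) - integral {a..a+h} \<zeta>"
  proof -
    have "integral {a..a+h} (\<lambda>x. \<zeta> (a + h) - \<zeta> x) = integral {a..a+h} (\<lambda>x. \<zeta> (a + h)) - integral {a..a+h} \<zeta>"
      by (rule integral_diff) (use int in auto)
    then show ?thesis using h by simp
  qed
  have int2: "((\<lambda>x. \<zeta> (a + h) - \<zeta> x) has_integral (h *\<^sub>R \<zeta> (a + h) - integral {a..a+h} \<zeta>)) (cbox a (a+h))"
  proof -
    have "(\<lambda>x. \<zeta> (a + h) - \<zeta> x) integrable_on {a..a+h}"
      by (intro integrable_diff integrable_const_ivl int)
    from integrable_integral[OF this] show ?thesis using eq by simp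
  qed
  have "norm (h *\<^sub>R \<zeta> (a + h) - integral {a..a+h} \<zeta>) \<le> (B * h) * h"
    using has_integral_bound[OF _ int2, of "B * h"] B0 h md by auto
  then show ?thesis unfolding B_def by (simp add: mult_ac)
qed


lemma decomp:
  assumes h: "0 < h" and m: "real m * h \<le> pi"
  shows "integral {0..real m * h} \<zeta> = (\<Sum>j=1..m. integral {real (j - 1) * h..real j * h} \<zeta>)"
  using m
proof (induction m)
  case 0
  then show ?case by simp
next
  case (Suc m)
  have m1: "real m * h \<le> real (Suc m) * h" using h by (simp add: mult_right_mono)
  then have IH: "integral {0..real m * h} \<zeta> = (\<Sum>j=1..m. integral {real (j - 1) * h..real j * h} \<zeta>)"
    using Suc by linarith
  have "integral {0..real (Suc m) * h} \<zeta> = integral {0..real m * h} \<zeta> + integral {real m * h..real (Suc m) * h} \<zeta>"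
    by (rule Henstock_Kurzweil_Integration.integral_combine[symmetric])
       (use m1 h Suc.prems Z4[of 0 "real (Suc m) * h"] in auto)
  then show ?case using IH by simp
qed


lemma main_bound:
  assumes n_def: "n = T div 2" and n3: "3 \<le> n" and Tc: "6 * pi / real T \<le> exp (-2*l)"
    and lam: "lam \<in> {0..pi}"
  shows "norm ((1 / real n) *\<^sub>R (\<Sum>j=1..nat \<lfloor>real n * lam / pi\<rfloor>. \<zeta> (2 * pi * real j / real T))
           - (1 / pi) *\<^sub>R integral {0..lam} \<zeta>) \<le> 15 * K * 2 powr l * ln (real n) powr l / real n"
proof -
  define h where "h = 2 * pi / real T"
  define L where "L = - ln h"
  define N where "N = nat \<lfloor>real n * lam / pi\<rfloor>"
  define \<Lambda> where "\<Lambda> = ln (real n)"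
  have lam0: "0 \<le> lam" "lam \<le> pi" using lam by auto
  have K0: "0 \<le> K" by (rule Z0)
  have "T = 2 * n \<or> T = 2 * n + 1" using n_def by arith
  then have T: "2 * real n \<le> real T" "real T \<le> 2 * real n + 1" by auto
  have n0: "real n \<ge> 3" using n3 by simp
  have Tpos: "real T > 0" using T n0 by linarith
  have h0: "h > 0" unfolding h_def using Tpos by simp
  have h3: "3 * h \<le> exp (-2*l)" using Tc unfolding h_def by simp
  have h19: "h \<le> 1/9" using h3 c0_props(2) by linarith
  have hpi: "h * pi \<le> 1"
  proof -
    have "h * pi \<le> (1/9) * 4" using h19 h0 pi_less_4 by (intro mult_mono) auto
    then show ?thesis by simp
  qed
  have hn: "h \<le> pi / real n"
    unfolding h_def using T n0 Tpos by (simp add: field_simps)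
  have L0: "L > 0" unfolding L_def using h0 h19 by simp
  have \<Lambda>1: "1 \<le> \<Lambda>"
  proof -
    have "1 = ln (exp (1::real))" by simp
    also have "\<dots> \<le> ln 3" using exp_le by (subst ln_le_cancel_iff) auto
    also have "\<dots> \<le> \<Lambda>" unfolding \<Lambda>_def using n0 by (subst ln_le_cancel_iff) auto
    finally show ?thesis .
  qed
  have L\<Lambda>: "L \<le> 2 * \<Lambda>"
  proof -
    have "L = ln (real T / (2 * pi))" unfolding L_def h_def using Tpos by (simp add: ln_div)
    also have "\<dots> \<le> ln (real T)" using Tpos pi_gt3 by (subst ln_le_cancel_iff) (auto simp: field_simps)
    also have "\<dots> \<le> ln (3 * real n)" using T n0 Tpos by (subst ln_le_cancel_iff) auto
    also have "\<dots> = ln 3 + \<Lambda>" unfolding \<Lambda>_def using n0 by (simp add: ln_mult)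
    also have "ln 3 \<le> \<Lambda>" unfolding \<Lambda>_def using n0 by (subst ln_le_cancel_iff) auto
    finally show ?thesis by simp
  qed
  have x0: "0 \<le> real n * lam / pi" using lam0 by simp
  have NR: "real N = real_of_int \<lfloor>real n * lam / pi\<rfloor>" unfolding N_def using x0 by simp
  have Nle: "real N \<le> real n * lam / pi" using NR by linarith
  have Ngt: "real n * lam / pi - 1 < real N" using NR by linarith
  have NNr: "real N \<le> real n"
  proof -
    have "real n * lam / pi \<le> real n" using lam0 n0 pi_gt_zero by (simp add: field_simps)
    then show ?thesis using Nle by linarith
  qed
  then have NN: "N \<le> n" by simp
  have Nh: "real N * h \<le> lam"
  proof -
    have "real N * h \<le> (real n * lam / pi) * h" using Nle h0 by (intro mult_right_mono) auto
    also have "\<dots> = 2 * real n * lam / real T" unfolding h_def by simp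
    also have "\<dots> \<le> lam"
    proof -
      have "(2 * real n) * lam \<le> real T * lam" using T lam0 by (intro mult_right_mono) auto
      then show ?thesis by (subst pos_divide_le_eq[OF Tpos]) (simp add: mult_ac)
    qed
    finally show ?thesis .
  qed
  have tail: "lam - real N * h \<le> 2 * h"
  proof -
    have "(real n * lam / pi - 1) * h \<le> real N * h" using Ngt h0 by (intro mult_right_mono) auto
    moreover have "(real n * lam / pi - 1) * h = 2 * real n * lam / real T - h" unfolding h_def using Tpos by (simp add: field_simps)
    moreover have "2 * real n * lam / real T \<ge> lam - pi / real T"
    proof -
      have "(real T - 1) * lam \<le> (2 * real n) * lam" using T lam0 by (intro mult_right_mono) auto
      moreover have "lam \<le> pi" using lam0 by simp
      ultimately have "real T * lam - pi \<le> 2 * real n * lam" by (simp add: algebra_simps)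
      then have "(real T * lam - pi) / real T \<le> (2 * real n * lam) / real T"
        using Tpos by (intro divide_right_mono) auto
      moreover have "lam - pi / real T = (real T * lam - pi) / real T" using Tpos by (simp add: field_simps)
      ultimately show ?thesis by simp
    qed
    moreover have "pi / real T = h / 2" unfolding h_def by simp
    ultimately show ?thesis using h0 by linarith
  qed
  have Nhpi: "real N * h \<le> pi" using Nh lam0 by linarith
  have sumeq: "(\<Sum>j=1..nat \<lfloor>real n * lam / pi\<rfloor>. \<zeta> (2 * pi * real j / real T)) = (\<Sum>j=1..N. \<zeta> (real j * h))"
    unfolding N_def h_def by (intro sum.cong) (auto simp: mult_ac)
  define S where "S = (\<Sum>j=1..N. \<zeta> (real j * h))"
  define Ij where "Ij j = integral {real (j - 1) * h..real j * h} \<zeta>" for j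
  define It where "It = integral {real N * h..lam} \<zeta>"
  define D where "D = (\<Sum>j=1..N. h *\<^sub>R \<zeta> (real j * h) - Ij j)"
  have Ieq: "integral {0..lam} \<zeta> = (\<Sum>j=1..N. Ij j) + It"
  proof -
    have "integral {0..lam} \<zeta> = integral {0..real N * h} \<zeta> + It"
      unfolding It_def
      by (rule Henstock_Kurzweil_Integration.integral_combine[symmetric])
         (use Nh h0 lam0 Z4[of 0 lam] in auto)
    also have "integral {0..real N * h} \<zeta> = (\<Sum>j=1..N. Ij j)"
      unfolding Ij_def by (rule decomp[OF h0 Nhpi])
    finally show ?thesis .
  qed
  have Deq: "D = h *\<^sub>R S - (\<Sum>j=1..N. Ij j)"
    unfolding D_def S_def by (simp add: sum_subtractf scaleR_sum_right)
  have ident: "(1 / real n) *\<^sub>R S - (1 / pi) *\<^sub>R integral {0..lam} \<zeta>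
      = (1 / pi) *\<^sub>R ((pi / real n - h) *\<^sub>R S + D - It)"
    unfolding Ieq Deq using n0 by (simp add: algebra_simps scaleR_diff_left)
  have Sb: "norm S \<le> real N * (K * L powr l)"
  proof -
    have "norm S \<le> (\<Sum>j=1..N. norm (\<zeta> (real j * h)))" unfolding S_def by (rule norm_sum)
    also have "\<dots> \<le> (\<Sum>j=1..N. K * L powr l)"
    proof (rule sum_mono)
      fix j assume j: "j \<in> {1..N}"
      have "h \<le> real j * h" using j h0 by simp
      moreover have "real j * h \<le> real N * h" using j h0 by (intro mult_right_mono) auto
      ultimately show "norm (\<zeta> (real j * h)) \<le> K * L powr l"
        unfolding L_def using Z5(1)[OF h0 hpi] Nhpi by auto
    qed
    finally show ?thesis by simp
  qed
  have coef: "(pi / real n - h) * real n \<le> pi / real n"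
  proof -
    have "(pi / real n - h) * real n = pi * (real T - 2 * real n) / real T"
      unfolding h_def using n0 Tpos by (simp add: field_simps)
    also have "\<dots> \<le> pi * 1 / real T" using T Tpos by (intro divide_right_mono mult_left_mono) auto
    also have "\<dots> \<le> pi / real n" using T n0 Tpos by (simp add: frac_le)
    finally show ?thesis .
  qed
  have c0: "0 \<le> pi / real n - h" using hn by simp
  have A: "norm ((pi / real n - h) *\<^sub>R S) \<le> (pi / real n) * (K * L powr l)"
  proof -
    have "norm ((pi / real n - h) *\<^sub>R S) = (pi / real n - h) * norm S" using c0 by simp
    also have "\<dots> \<le> (pi / real n - h) * (real N * (K * L powr l))" using c0 Sb by (intro mult_left_mono)
    also have "\<dots> \<le> (pi / real n - h) * (real n * (K * L powr l))"
      using c0 NNr K0 by (intro mult_left_mono mult_right_mono) auto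
    also have "\<dots> = ((pi / real n - h) * real n) * (K * L powr l)" by simp
    also have "\<dots> \<le> (pi / real n) * (K * L powr l)" using coef K0 by (intro mult_right_mono) auto
    finally show ?thesis .
  qed
  define b where "b j = (if j = 1 then 7 * K * h * L powr l else 0)
      + h * K * L powr (l - 1) * (if j = 1 then 0 else inverse (real (j - 1)))" for j :: nat
  have Db: "norm D \<le> (\<Sum>j=1..N. b j)"
  proof -
    have "norm D \<le> (\<Sum>j=1..N. norm (h *\<^sub>R \<zeta> (real j * h) - Ij j))" unfolding D_def by (rule norm_sum)
    also have "\<dots> \<le> (\<Sum>j=1..N. b j)"
    proof (rule sum_mono)
      fix j assume j: "j \<in> {1..N}"
      show "norm (h *\<^sub>R \<zeta> (real j * h) - Ij j) \<le> b j"
      proof (cases "j = 1")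
        case True
        have hp: "h \<le> pi" using hpi h0 pi_gt3 h19 by linarith
        have "norm (h *\<^sub>R \<zeta> (real j * h) - Ij j) \<le> norm (h *\<^sub>R \<zeta> h) + norm (integral {0..h} \<zeta>)"
          using True norm_triangle_ineq4[of "h *\<^sub>R \<zeta> h" "integral {0..h} \<zeta>"] unfolding Ij_def by simp
        also have "norm (h *\<^sub>R \<zeta> h) \<le> h * (K * L powr l)"
          using Z5(1)[OF h0 hpi, of h] h0 hp unfolding L_def by (simp add: mult_left_mono)
        also have "norm (integral {0..h} \<zeta>) \<le> 6 * K * h * L powr l"
          unfolding L_def by (rule Z6[OF h0 h3 hpi]) (use h0 hp in auto)
        finally show ?thesis using True unfolding b_def by (simp add: algebra_simps)
      next
        case False
        then have j2: "j \<ge> 2" using j by auto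
        define a where "a = real (j - 1) * h"
        have ah: "a + h = real j * h" unfolding a_def using j2 by (simp add: of_nat_diff algebra_simps)
        have ha: "h \<le> a" unfolding a_def using j2 h0 by simp
        have ap: "a + h \<le> pi" unfolding ah using j h0 Nhpi
          by (meson atLeastAtMost_iff mult_right_mono of_nat_le_iff order.strict_implies_order order_trans)
        have "norm (h *\<^sub>R \<zeta> (a + h) - integral {a..a+h} \<zeta>) \<le> h * h * (K / a * (- ln h) powr (l - 1))"
          by (rule Z7[OF h0 hpi ha ap])
        also have "h * h * (K / a * (- ln h) powr (l - 1)) = b j"
          unfolding b_def a_def L_def using False h0 j2 by (simp add: field_simps)
        finally show ?thesis unfolding Ij_def using ah by (simp add: a_def)
      qed
    qed
    finally show ?thesis .
  qed
  have sumb: "(\<Sum>j=1..N. b j) \<le> 7 * K * h * L powr l + h * K * L powr (l - 1) * (1 + \<Lambda>)"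
  proof -
    have "(\<Sum>j=1..N. b j) = (\<Sum>j=1..N. (if j = 1 then 7 * K * h * L powr l else 0))
        + h * K * L powr (l - 1) * (\<Sum>j=1..N. (if j = 1 then (0::real) else inverse (real (j - 1))))"
      unfolding b_def by (simp add: sum.distrib sum_distrib_left)
    also have "(\<Sum>j=1..N. (if j = 1 then 7 * K * h * L powr l else 0)) \<le> 7 * K * h * L powr l"
      using K0 h0 by (simp add: sum.delta')
    also have "(\<Sum>j=1..N. (if j = 1 then (0::real) else inverse (real (j - 1)))) \<le> 1 + \<Lambda>"
      unfolding sum_harm \<Lambda>_def using NN n3 by (intro harm_le) auto
    then have "h * K * L powr (l - 1) * (\<Sum>j=1..N. (if j = 1 then (0::real) else inverse (real (j - 1))))
        \<le> h * K * L powr (l - 1) * (1 + \<Lambda>)" using h0 K0 by (intro mult_left_mono) auto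
    finally show ?thesis by simp
  qed
  have Itb: "norm It \<le> 6 * K * h * L powr l"
    unfolding It_def L_def by (rule Z6[OF h0 h3 hpi]) (use Nh lam0 tail h0 in auto)
  define P where "P = (2 * \<Lambda>) powr l"
  have LP: "L powr l \<le> P" unfolding P_def using L0 L\<Lambda> l1 by (intro powr_mono2) auto
  have LP1: "L powr (l - 1) * (1 + \<Lambda>) \<le> P"
  proof -
    have "L powr (l - 1) \<le> (2 * \<Lambda>) powr (l - 1)" using L0 L\<Lambda> l1 by (intro powr_mono2) auto
    then have "L powr (l - 1) * (1 + \<Lambda>) \<le> (2 * \<Lambda>) powr (l - 1) * (2 * \<Lambda>)"
      using \<Lambda>1 by (intro mult_mono) auto
    also have "\<dots> = P" unfolding P_def using \<Lambda>1 by (simp add: powr_diff)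
    finally show ?thesis .
  qed
  have tot: "norm ((pi / real n - h) *\<^sub>R S + D - It) \<le> 15 * (pi / real n) * K * P"
  proof -
    have "norm ((pi / real n - h) *\<^sub>R S + D - It) \<le> norm ((pi / real n - h) *\<^sub>R S) + norm D + norm It"
      by (meson norm_triangle_ineq norm_triangle_ineq4 add_mono order_trans order_refl)
    also have "\<dots> \<le> (pi / real n) * (K * L powr l) + (7 * K * h * L powr l + h * K * (L powr (l - 1) * (1 + \<Lambda>))) + 6 * K * h * L powr l"
      using A Db sumb Itb by (simp add: mult_ac)
    also have "\<dots> \<le> (pi / real n) * (K * P) + (7 * K * (pi / real n) * P + (pi / real n) * K * P) + 6 * K * (pi / real n) * P"
    proof -
      have hK: "0 \<le> K * h" using K0 h0 by simp
      have a1: "(pi / real n) * (K * L powr l) \<le> (pi / real n) * (K * P)"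
        using LP K0 n0 by (intro mult_left_mono) auto
      have a2: "K * h * L powr l \<le> K * (pi / real n) * P"
        using LP hn K0 h0 by (intro mult_mono) (auto intro: mult_left_mono)
      have a3: "h * K * (L powr (l - 1) * (1 + \<Lambda>)) \<le> (pi / real n) * K * P"
        using LP1 hn K0 h0 \<Lambda>1 by (intro mult_mono) (auto intro: mult_right_mono)
      have a4: "7 * K * h * L powr l \<le> 7 * K * (pi / real n) * P" using a2 by simp
      have a5: "6 * K * h * L powr l \<le> 6 * K * (pi / real n) * P" using a2 by simp
      show ?thesis using a1 a3 a4 a5 by linarith
    qed
    also have "\<dots> = 15 * (pi / real n) * K * P" by (simp add: algebra_simps)
    finally show ?thesis .
  qed
  have "norm ((1 / real n) *\<^sub>R S - (1 / pi) *\<^sub>R integral {0..lam} \<zeta>)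
      = (1 / pi) * norm ((pi / real n - h) *\<^sub>R S + D - It)" unfolding ident by simp
  also have "\<dots> \<le> (1 / pi) * (15 * (pi / real n) * K * P)" using tot by (intro mult_left_mono) auto
  also have "\<dots> = 15 * K * P / real n" by simp
  also have "P = 2 powr l * ln (real n) powr l" unfolding P_def \<Lambda>_def using \<Lambda>1 by (simp add: powr_mult \<Lambda>_def)
  finally show ?thesis unfolding sumeq S_def by (simp add: mult_ac)
qed

end


theorem lemma1:
  fixes \<zeta> \<zeta>' :: "real \<Rightarrow> 'p::euclidean_space" and K l :: real
  assumes deriv: "\<And>x. x \<in> {0<..pi} \<Longrightarrow> (\<zeta> has_vector_derivative \<zeta>' x) (at x within {0<..pi})"
    and cont: "continuous_on {0<..pi} \<zeta>'"
    and l1: "l \<ge> 1"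
    and bnd: "\<And>x. x \<in> {0<..pi} \<Longrightarrow> norm (\<zeta> x) \<le> K * abspow (ln x) l"
    and dbnd: "\<And>x. x \<in> {0<..pi} \<Longrightarrow> norm (\<zeta>' x) \<le> K * inverse x * abspow (ln x) (l - 1)"
  shows "\<exists>K'. \<forall>\<^sub>F (T::nat) in sequentially.
           \<forall>lam\<in>{0..pi}.
             norm ((1 / real (T div 2)) *\<^sub>R
                     (\<Sum>j=1..nat \<lfloor>real (T div 2) * lam / pi\<rfloor>. \<zeta> (2 * pi * real j / real T))
                   - (1 / pi) *\<^sub>R integral {0..lam} \<zeta>)
             \<le> K' * ln (real (T div 2)) powr l / real (T div 2)"
proof -
  define c where "c = exp (-2*l)"
  have c0: "c > 0" unfolding c_def by simp
  obtain T0 :: nat where T0: "6 * pi / c \<le> real T0" using real_arch_simple by blast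
  have "\<forall>\<^sub>F (T::nat) in sequentially.
           \<forall>lam\<in>{0..pi}.
             norm ((1 / real (T div 2)) *\<^sub>R
                     (\<Sum>j=1..nat \<lfloor>real (T div 2) * lam / pi\<rfloor>. \<zeta> (2 * pi * real j / real T))
                   - (1 / pi) *\<^sub>R integral {0..lam} \<zeta>)
             \<le> (15 * K * 2 powr l) * ln (real (T div 2)) powr l / real (T div 2)"
  proof (rule eventually_sequentiallyI[of "max 6 T0"])
    fix T :: nat assume T: "max 6 T0 \<le> T"
    have n3: "3 \<le> T div 2" using T by (simp add: max_def split: if_splits; arith)
    have Tpos: "real T > 0" using T by simp
    have "6 * pi / c \<le> real T" using T0 T by linarith
    then have "6 * pi \<le> real T * c" using c0 by (simp add: pos_divide_le_eq)
    then have Tc: "6 * pi / real T \<le> exp (-2*l)" unfolding c_def using Tpos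
      by (simp add: pos_divide_le_eq mult_ac)
    show "\<forall>lam\<in>{0..pi}.
             norm ((1 / real (T div 2)) *\<^sub>R
                     (\<Sum>j=1..nat \<lfloor>real (T div 2) * lam / pi\<rfloor>. \<zeta> (2 * pi * real j / real T))
                   - (1 / pi) *\<^sub>R integral {0..lam} \<zeta>)
             \<le> (15 * K * 2 powr l) * ln (real (T div 2)) powr l / real (T div 2)"
      using main_bound[OF deriv cont l1 bnd dbnd refl n3 Tc] by blast
  qed
  then show ?thesis by blast
qed

end
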